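(* Let $n\ge2$. Let $Y$ have a continuous distribution function $G$ on $[l_G,r_G]$, and let $g$ be positive, continuous and strictly decreasing on $(l_G,r_G)$ with $\lim_{y\to r_G^-}g(y)=0$; put $\tau=\lim_{y\to l_G^+}[g(y)]^{-2}$. Then \[ E[g(Y(n))\mid Y(n-1)=s,\ Y(n+1)=t]=\frac{2g(s)g(t)}{g(s)+g(t)}\qquad (l_G<s<t<r_G) \] holds if and only if $G(y)=1-\exp\{-c([g(y)]^{-2}-\tau)\}$ for $l_G<y<r_G$, for some constant $c>0$.
   Context: $Y_1,Y_2,\dots$ are i.i.d. copies of $Y$ with distribution function $G$; $l_G=\inf\{y:G(y)>0\}$, $r_G=\sup\{y:G(y)<1\}$. Upper record times $L(1)=1$, $L(m)=\min\{j>L(m-1):Y_j>Y_{L(m-1)}\}$, record values $Y(m)=Y_{L(m)}$. With $R(y)=-\ln(1-G(y))$, conditional expectations given $Y(n-1)=s$, $Y(n+1)=t$ use the conditional density of $Y(n)$: $\frac{R'(x)}{R(t)-R(s)}$, $s<x<t$. *)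

theory Defs
  imports "HOL-Analysis.Analysis"
begin

definition lG :: "(real \<Rightarrow> real) \<Rightarrow> ereal" where
  "lG G = Inf (ereal ` {y. G y > 0})"

definition rG :: "(real \<Rightarrow> real) \<Rightarrow> ereal" where
  "rG G = Sup (ereal ` {y. G y < 1})"

definition at_left_e :: "ereal \<Rightarrow> real filter" where
  "at_left_e r = (if r = \<infinity> then at_top else at_left (real_of_ereal r))"

definition at_right_e :: "ereal \<Rightarrow> real filter" where
  "at_right_e l = (if l = -\<infinity> then at_bot else at_right (real_of_ereal l))"

definition is_distr_fun :: "(real \<Rightarrow> real) \<Rightarrow> bool" where
  "is_distr_fun G \<longleftrightarrow> mono G \<and> (\<forall>x. continuous (at_right x) G)
     \<and> (G \<longlongrightarrow> 0) at_bot \<and> (G \<longlongrightarrow> 1) at_top"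

definition hazR :: "(real \<Rightarrow> real) \<Rightarrow> real \<Rightarrow> real" where
  "hazR G y = - ln (1 - G y)"

text \<open>Lebesgue--Stieltjes measure dR restricted to [s,t] (R frozen outside [s,t]).\<close>
definition hazR_measure :: "(real \<Rightarrow> real) \<Rightarrow> real \<Rightarrow> real \<Rightarrow> real measure" where
  "hazR_measure G s t = interval_measure (\<lambda>x. hazR G (max s (min t x)))"

text \<open>E[h(Y(n)) | Y(n-1)=s, Y(n+1)=t]: integral of h against the conditional law
  dR(x)/(R(t)-R(s)) on (s,t) (density R'(x)/(R(t)-R(s)) when R is differentiable).\<close>
definition rec_cond_exp :: "(real \<Rightarrow> real) \<Rightarrow> (real \<Rightarrow> real) \<Rightarrow> real \<Rightarrow> real \<Rightarrow> real" where
  "rec_cond_exp G h s t =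
     (LINT x:{s<..<t}|hazR_measure G s t. h x) / (hazR G t - hazR G s)"

end

theory Submission
  imports Defs "HOL-Probability.Probability"
begin

lemma interval_measure_shift: "interval_measure (\<lambda>x. F x + c) = interval_measure F"
  unfolding interval_measure_def by simp

locale clampH =
  fixes H :: "real \<Rightarrow> real" and s t D :: real
  assumes monoH: "mono H" and contH: "continuous_on UNIV H" and st: "s \<le> t"
    and lowH: "\<And>x. x \<le> s \<Longrightarrow> H x = 0" and highH: "\<And>x. t \<le> x \<Longrightarrow> H x = D"
begin

lemma monoH': "x \<le> y \<Longrightarrow> H x \<le> H y" using monoH by (auto simp: mono_def)
lemma rcH: "continuous (at_right a) H"
  using contH by (simp add: continuous_on_eq_continuous_within continuous_at_imp_continuous_at_within)
lemma H0: "0 \<le> H x" using monoH'[of "min x s" x] lowH[of "min x s"] by simp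
lemma HD: "H x \<le> D" using monoH'[of x "max x t"] highH[of "max x t"] by simp
lemma D0: "0 \<le> D" using H0[of t] highH[of t] by simp
lemma lim_bot: "(H \<longlongrightarrow> 0) at_bot"
  by (rule tendsto_eventually) (auto simp: eventually_at_bot_linorder intro!: exI[of _ s] lowH)
lemma lim_top: "(H \<longlongrightarrow> D) at_top"
  by (rule tendsto_eventually) (auto simp: eventually_at_top_linorder intro!: exI[of _ t] highH)

abbreviation "M \<equiv> interval_measure H"

lemma fbm: "finite_borel_measure M"
  by (rule finite_borel_measure_interval_measure[OF monoH' rcH lim_bot lim_top D0])

lemma M_Iic: "measure M {..x} = H x"
  by (rule measure_interval_measure_Iic[OF monoH' rcH lim_bot])

lemma M_UNIV: "emeasure M UNIV = D"
  by (rule interval_measure_UNIV[OF monoH' rcH lim_bot lim_top D0])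

lemma H_meas[measurable]: "H \<in> borel_measurable borel"
  using contH by (simp add: borel_measurable_continuous_onI)

lemma cdf_distr: "measure M {x. H x \<le> v} = max 0 (min D v)"
proof -
  consider "v < 0" | "0 \<le> v" "v < D" | "D \<le> v" by linarith
  then show ?thesis
  proof cases
    case 1
    then have "{x. H x \<le> v} = {}" using H0 by (smt (verit) Collect_empty_eq)
    then show ?thesis using 1 by simp
  next
    case 3
    then have "{x. H x \<le> v} = UNIV" using HD order.trans by blast
    then show ?thesis using 3 M_UNIV D0 by (simp add: measure_def)
  next
    case 2
    define A where "A = {x. H x \<le> v}"
    have clA: "closed A" unfolding A_def
      by (rule closed_Collect_le[OF contH continuous_on_const])
    have neA: "s \<in> A" using 2 lowH[of s] by (simp add: A_def)
    have bdA: "bdd_above A"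
    proof (rule bdd_aboveI[of A t])
      fix x assume "x \<in> A"
      then have "H x \<le> v" by (simp add: A_def)
      show "x \<le> t"
      proof (rule ccontr)
        assume "\<not> x \<le> t" then have "H x = D" using highH by simp
        with \<open>H x \<le> v\<close> 2 show False by simp
      qed
    qed
    define m where "m = Sup A"
    have mA: "m \<in> A" unfolding m_def using closed_contains_Sup[OF _ bdA clA] neA by blast
    have A_eq: "A = {..m}"
    proof
      show "A \<subseteq> {..m}" using cSup_upper[OF _ bdA] m_def by auto
      show "{..m} \<subseteq> A"
      proof
        fix x assume "x \<in> {..m}"
        then have "x \<le> m" by simp
        then have "H x \<le> H m" by (rule monoH')
        then show "x \<in> A" using mA by (simp add: A_def)
      qed
    qed
    obtain x0 where x0: "s \<le> x0" "x0 \<le> t" "H x0 = v"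
      using IVT'[of H s v t] 2 lowH[of s] highH[of t] st contH
      by (auto intro: continuous_on_subset)
    have "x0 \<in> A" using x0 by (simp add: A_def)
    then have "x0 \<le> m" using A_eq by auto
    then have "v \<le> H m" using x0 monoH' by metis
    moreover have "H m \<le> v" using mA by (simp add: A_def)
    ultimately have "H m = v" by simp
    then show ?thesis using M_Iic[of m] A_eq 2 unfolding A_def by simp
  qed
qed

lemma distr_eq: "distr M lborel H = density lborel (\<lambda>v. ennreal (indicator {0..D} v))"
proof (rule cdf_unique')
  interpret fM: finite_borel_measure M by (rule fbm)
  show "finite_borel_measure (distr M lborel H)"
    using M_UNIV by (auto intro!: finite_measureI simp: finite_borel_measure_def
       finite_borel_measure_axioms_def emeasure_distr)
  show "finite_borel_measure (density lborel (\<lambda>v. ennreal (indicator {0..D} v)))"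
    using D0 by (auto intro!: finite_measureI simp: finite_borel_measure_def
       finite_borel_measure_axioms_def ennreal_indicator emeasure_restricted)
  show "cdf (distr M lborel H) = cdf (density lborel (\<lambda>v. ennreal (indicator {0..D} v)))"
  proof
    fix v
    have "cdf (distr M lborel H) v = measure M {x. H x \<le> v}"
      unfolding cdf_def by (simp add: measure_distr vimage_def)
    also have "\<dots> = max 0 (min D v)" by (rule cdf_distr)
    also have "\<dots> = cdf (density lborel (\<lambda>v. ennreal (indicator {0..D} v))) v"
    proof -
      have "cdf (density lborel (\<lambda>v. ennreal (indicator {0..D} v))) v = measure lborel ({0..D} \<inter> {..v})"
        unfolding cdf_def measure_def by (simp add: ennreal_indicator emeasure_restricted)
      also have "{0..D} \<inter> {..v} = {0..min D v}" by auto
      finally show ?thesis using D0 by simp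
    qed
    finally show "cdf (distr M lborel H) v = cdf (density lborel (\<lambda>v. ennreal (indicator {0..D} v))) v" .
  qed
qed

lemma integral_H:
  fixes f :: "real \<Rightarrow> real"
  assumes [measurable]: "f \<in> borel_measurable borel"
  shows "(LINT x|M. f (H x)) = (LINT v|lborel. indicator {0..D} v * f v)"
proof -
  have "(LINT x|M. f (H x)) = (LINT v|distr M lborel H. f v)"
    by (rule integral_distr[symmetric]) measurable
  also have "\<dots> = (LINT v|lborel. indicator {0..D} v * f v)"
    unfolding distr_eq by (subst integral_density) auto
  finally show ?thesis .
qed

lemma null_low: "{..s} \<in> null_sets M"
  using emeasure_interval_measure_Iic[OF monoH' rcH lim_bot, of s] lowH[of s]
  by (simp add: null_sets_def)

lemma null_high: "{t..} \<in> null_sets M"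
proof -
  have "(\<Union>n::nat. {t..t + real n}) \<in> null_sets M"
  proof (rule null_sets_UN)
    fix n :: nat
    have "emeasure M {t..t + real n} = H (t + real n) - H t"
      by (rule emeasure_interval_measure_Icc[OF _ monoH' contH]) simp
    also have "\<dots> = 0" using highH[of t] highH[of "t + real n"] by simp
    finally show "{t..t + real n} \<in> null_sets M" by (simp add: null_sets_def)
  qed
  also have "(\<Union>n::nat. {t..t + real n}) = {t..}"
  proof (auto)
    fix x assume "t \<le> x"
    obtain n :: nat where "x - t \<le> real n" using real_arch_simple by blast
    then show "\<exists>n. x \<le> t + real n" by (intro exI[of _ n]) simp
  qed
  finally show ?thesis .
qed

lemma AE_inside: "AE x in M. s < x \<and> x < t"
  by (rule AE_I'[OF null_sets.Un[OF null_low null_high]]) auto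

lemma set_integral_H:
  fixes h f :: "real \<Rightarrow> real"
  assumes [measurable]: "f \<in> borel_measurable borel"
    and hc: "continuous_on {s<..<t} h"
    and hf: "\<And>x. s < x \<Longrightarrow> x < t \<Longrightarrow> h x = f (H x)"
  shows "(LINT x:{s<..<t}|M. h x) = (LINT v|lborel. indicator {0..D} v * f v)"
proof -
  have "(LINT x:{s<..<t}|M. h x) = (LINT x|M. f (H x))"
    unfolding set_lebesgue_integral_def
  proof (rule integral_cong_AE)
    show "(\<lambda>x. indicator {s<..<t} x *\<^sub>R h x) \<in> borel_measurable M"
      using borel_measurable_continuous_on_indicator[OF _ hc] by simp
    show "(\<lambda>x. f (H x)) \<in> borel_measurable M" by measurable
    show "AE x in M. indicator {s<..<t} x *\<^sub>R h x = f (H x)"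
      using AE_inside by eventually_elim (simp add: hf)
  qed
  also have "\<dots> = (LINT v|lborel. indicator {0..D} v * f v)" by (rule integral_H) simp
  finally show ?thesis .
qed

end

lemma clampH_of_R:
  fixes R :: "real \<Rightarrow> real"
  assumes st: "s \<le> t" and cR: "continuous_on {s..t} R" and mR: "mono_on {s..t} R"
  shows "clampH (\<lambda>x. R (max s (min t x)) - R s) s t (R t - R s)"
proof
  show "mono (\<lambda>x. R (max s (min t x)) - R s)"
    by (rule monoI) (use st in \<open>auto intro!: mono_onD[OF mR]\<close>)
  have "continuous_on UNIV (\<lambda>x. R (max s (min t x)))"
    by (rule continuous_on_compose2[OF cR]) (use st in \<open>auto intro!: continuous_intros\<close>)
  then show "continuous_on UNIV (\<lambda>x. R (max s (min t x)) - R s)"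
    by (intro continuous_intros)
qed (use st in auto)

definition IM :: "(real \<Rightarrow> real) \<Rightarrow> real \<Rightarrow> real \<Rightarrow> real measure" where
  "IM R s t = interval_measure (\<lambda>x. R (max s (min t x)))"

lemma IM_eq: "IM R s t = interval_measure (\<lambda>x. R (max s (min t x)) - R s)"
  unfolding IM_def using interval_measure_shift[of "\<lambda>x. R (max s (min t x))" "- R s"] by simp

lemma additivity:
  fixes R f :: "real \<Rightarrow> real"
  assumes ab: "a \<le> b" and bc: "b \<le> c" and cR: "continuous_on {a..c} R" and mR: "mono_on {a..c} R"
    and cf: "continuous_on {a..c} f"
  shows "(LINT x:{a<..<c}|IM R a c. f x)
       = (LINT x:{a<..<b}|IM R a b. f x) + (LINT x:{b<..<c}|IM R b c. f x)"
proof -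
  define Hac where "Hac = (\<lambda>x. R (max a (min c x)) - R a)"
  define Hab where "Hab = (\<lambda>x. R (max a (min b x)) - R a)"
  define Hbc where "Hbc = (\<lambda>x. R (max b (min c x)) - R b)"
  interpret A: clampH Hac a c "R c - R a" unfolding Hac_def
    by (rule clampH_of_R) (use ab bc cR mR in auto)
  interpret B: clampH Hab a b "R b - R a" unfolding Hab_def
    by (rule clampH_of_R) (use ab bc cR mR in \<open>auto intro: continuous_on_subset mono_on_subset\<close>)
  interpret C: clampH Hbc b c "R c - R b" unfolding Hbc_def
    by (rule clampH_of_R) (use ab bc cR mR in \<open>auto intro: continuous_on_subset mono_on_subset\<close>)
  interpret fA: finite_borel_measure "interval_measure Hac" by (rule A.fbm)
  have Mab: "IM R a b = density (interval_measure Hac) (\<lambda>x. ennreal (indicator {..b} x))"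
    unfolding IM_eq Hab_def[symmetric]
  proof (rule cdf_unique')
    show "finite_borel_measure (interval_measure Hab)" by (rule B.fbm)
    show "finite_borel_measure (density (interval_measure Hac) (\<lambda>x. ennreal (indicator {..b} x)))"
      by (auto intro!: finite_measureI simp: finite_borel_measure_def
         finite_borel_measure_axioms_def ennreal_indicator emeasure_restricted)
    show "cdf (interval_measure Hab) = cdf (density (interval_measure Hac) (\<lambda>x. ennreal (indicator {..b} x)))"
    proof
      fix x
      have "cdf (density (interval_measure Hac) (\<lambda>x. ennreal (indicator {..b} x))) x
          = measure (interval_measure Hac) ({..b} \<inter> {..x})"
        unfolding cdf_def measure_def by (simp add: ennreal_indicator emeasure_restricted)
      also have "{..b} \<inter> {..x} = {..min b x}" by auto
      also have "measure (interval_measure Hac) {..min b x} = Hac (min b x)" by (rule A.M_Iic)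
      also have "\<dots> = Hab x" unfolding Hac_def Hab_def using bc
        by (simp add: min_def)
      finally show "cdf (interval_measure Hab) x = cdf (density (interval_measure Hac) (\<lambda>x. ennreal (indicator {..b} x))) x"
        by (simp add: cdf_def B.M_Iic)
    qed
  qed
  have Mbc: "IM R b c = density (interval_measure Hac) (\<lambda>x. ennreal (indicator {b<..} x))"
    unfolding IM_eq Hbc_def[symmetric]
  proof (rule cdf_unique')
    show "finite_borel_measure (interval_measure Hbc)" by (rule C.fbm)
    show "finite_borel_measure (density (interval_measure Hac) (\<lambda>x. ennreal (indicator {b<..} x)))"
      by (auto intro!: finite_measureI simp: finite_borel_measure_def
         finite_borel_measure_axioms_def ennreal_indicator emeasure_restricted)
    show "cdf (interval_measure Hbc) = cdf (density (interval_measure Hac) (\<lambda>x. ennreal (indicator {b<..} x)))"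
    proof
      fix x
      have "cdf (density (interval_measure Hac) (\<lambda>x. ennreal (indicator {b<..} x))) x
          = measure (interval_measure Hac) ({b<..} \<inter> {..x})"
        unfolding cdf_def measure_def by (simp add: ennreal_indicator emeasure_restricted)
      also have "\<dots> = Hbc x"
      proof (cases "x \<le> b")
        case True
        then have "{b<..} \<inter> {..x} = {}" by auto
        then show ?thesis using True bc
          by (cases "c \<le> x") (auto simp: Hbc_def max_def min_def intro: arg_cong[of _ _ R])
      next
        case False
        then have "{b<..} \<inter> {..x} = {b<..x}" by auto
        moreover have "measure (interval_measure Hac) {b<..x} = Hac x - Hac b"
          by (rule measure_interval_measure_Ioc[OF _ A.monoH' A.rcH]) (use False in auto)
        ultimately show ?thesis using False ab unfolding Hac_def Hbc_def
          by (simp add: min_def max_def)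
      qed
      finally show "cdf (interval_measure Hbc) x = cdf (density (interval_measure Hac) (\<lambda>x. ennreal (indicator {b<..} x))) x"
        by (simp add: cdf_def C.M_Iic)
    qed
  qed
  let ?M = "interval_measure Hac"
  have meas: "(\<lambda>x. indicator S x *\<^sub>R f x) \<in> borel_measurable borel" if "S \<subseteq> {a..c}" "S \<in> sets borel" for S
    using borel_measurable_continuous_on_indicator[OF that(2) continuous_on_subset[OF cf that(1)]] .
  have bm: "h \<in> borel_measurable ?M \<longleftrightarrow> h \<in> borel_measurable borel" for h :: "real \<Rightarrow> real"
    by (simp add: measurable_def)
  obtain B where B: "\<And>x. x \<in> {a..c} \<Longrightarrow> norm (f x) \<le> B"
    using compact_imp_bounded[OF compact_continuous_image[OF cf compact_Icc]]
    unfolding bounded_iff by force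
  have integ: "integrable ?M (\<lambda>x. indicator S x *\<^sub>R f x)" if "S \<subseteq> {a..c}" "S \<in> sets borel" for S
  proof (rule fA.integrable_const_bound[where B = B])
    show "AE x in ?M. norm (indicator S x *\<^sub>R f x) \<le> B"
    proof (rule AE_I2)
      fix x
      have "0 \<le> B" using B[of a] ab bc by (auto intro: order.trans[OF norm_ge_zero])
      then show "norm (indicator S x *\<^sub>R f x) \<le> B"
        using B that(1) by (auto simp: indicator_def)
    qed
    show "(\<lambda>x. indicator S x *\<^sub>R f x) \<in> borel_measurable ?M"
      using meas[OF that] unfolding bm by simp
  qed
  have I1: "(LINT x:{a<..<b}|IM R a b. f x) = (LINT x|?M. indicator {a<..<b} x *\<^sub>R f x)"
  proof -
    have m: "(\<lambda>x. indicator {a<..<b} x *\<^sub>R f x) \<in> borel_measurable ?M"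
      unfolding bm by (rule meas) (use bc in auto)
    show ?thesis unfolding Mab set_lebesgue_integral_def
      by (subst integral_density[OF m]) (auto intro!: Bochner_Integration.integral_cong simp: indicator_def bc)
  qed
  have I2: "(LINT x:{b<..<c}|IM R b c. f x) = (LINT x|?M. indicator {b<..<c} x *\<^sub>R f x)"
  proof -
    have m: "(\<lambda>x. indicator {b<..<c} x *\<^sub>R f x) \<in> borel_measurable ?M"
      unfolding bm by (rule meas) (use ab in auto)
    show ?thesis unfolding Mbc set_lebesgue_integral_def
      by (subst integral_density[OF m]) (auto intro!: Bochner_Integration.integral_cong simp: indicator_def ab)
  qed
  have I3: "(LINT x:{a<..<c}|IM R a c. f x) = (LINT x|?M. indicator {a<..<c} x *\<^sub>R f x)"
    unfolding IM_eq Hac_def[symmetric] set_lebesgue_integral_def ..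
  have mab: "(\<lambda>x. indicator {a<..<b} x *\<^sub>R f x) \<in> borel_measurable borel"
    by (rule meas) (use bc in auto)
  have mbc: "(\<lambda>x. indicator {b<..<c} x *\<^sub>R f x) \<in> borel_measurable borel"
    by (rule meas) (use ab in auto)
  have mac: "(\<lambda>x. indicator {a<..<c} x *\<^sub>R f x) \<in> borel_measurable borel"
    by (rule meas) auto
  have nb: "{b} \<in> null_sets ?M"
  proof -
    have "emeasure ?M {b..b} = Hac b - Hac b"
      by (rule emeasure_interval_measure_Icc[OF _ A.monoH' A.contH]) simp
    then show ?thesis by (simp add: null_sets_def)
  qed
  have "(LINT x|?M. indicator {a<..<c} x *\<^sub>R f x)
      = (LINT x|?M. indicator {a<..<b} x *\<^sub>R f x + indicator {b<..<c} x *\<^sub>R f x)"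
  proof (rule integral_cong_AE)
    show "AE x in ?M. indicator {a<..<c} x *\<^sub>R f x = indicator {a<..<b} x *\<^sub>R f x + indicator {b<..<c} x *\<^sub>R f x"
      by (rule AE_I'[OF nb]) (use ab bc in \<open>auto simp: indicator_def\<close>)
  qed (use mab mbc mac in \<open>auto simp: bm\<close>)
  also have "\<dots> = (LINT x|?M. indicator {a<..<b} x *\<^sub>R f x) + (LINT x|?M. indicator {b<..<c} x *\<^sub>R f x)"
    by (rule Bochner_Integration.integral_add; rule integ) (use ab bc in auto)
  finally show ?thesis using I1 I2 I3 by simp
qed

lemma alg3:
  fixes ga gb gc X Y :: real
  assumes "ga > gb" "gb > gc" "gc > 0"
    and eq: "X * (2*ga*gb/(ga+gb)) + Y * (2*gb*gc/(gb+gc)) = (X+Y) * (2*ga*gc/(ga+gc))"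
  shows "X / (1/gb^2 - 1/ga^2) = Y / (1/gc^2 - 1/gb^2)"
proof -
  have p: "ga + gb \<noteq> 0" "gb + gc \<noteq> 0" "ga + gc \<noteq> 0" using assms by auto
  have e2: "X * (2*ga*gb) * ((gb+gc)*(ga+gc)) + Y * (2*gb*gc) * ((ga+gb)*(ga+gc))
      = (X+Y) * (2*ga*gc) * ((ga+gb)*(gb+gc))"
  proof -
    define mab where "mab = 2*ga*gb/(ga+gb)"
    define mbc where "mbc = 2*gb*gc/(gb+gc)"
    define mac where "mac = 2*ga*gc/(ga+gc)"
    have h1: "mab * (ga+gb) = 2*ga*gb" unfolding mab_def using p by simp
    have h2: "mbc * (gb+gc) = 2*gb*gc" unfolding mbc_def using p by simp
    have h3: "mac * (ga+gc) = 2*ga*gc" unfolding mac_def using p by simp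
    have h: "X * mab + Y * mbc = (X+Y) * mac" using eq unfolding mab_def mbc_def mac_def .
    show ?thesis using h h1 h2 h3 by algebra
  qed
  have e3: "X * ga^2 * (gb - gc) * (gb + gc) = Y * gc^2 * (ga - gb) * (ga + gb)"
  proof -
    have "2 * (X * ga^2 * (gb - gc) * (gb + gc) - Y * gc^2 * (ga - gb) * (ga + gb))
       = (X * (2*ga*gb) * ((gb+gc)*(ga+gc)) + Y * (2*gb*gc) * ((ga+gb)*(ga+gc)))
         - ((X+Y) * (2*ga*gc) * ((ga+gb)*(gb+gc)))"
      by (simp add: algebra_simps power2_eq_square)
    then show ?thesis using e2 by simp
  qed
  have d1: "1/gb^2 - 1/ga^2 = (ga - gb)*(ga+gb)/(ga^2*gb^2)" using assms
    by (simp add: field_simps power2_eq_square)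
  have d2: "1/gc^2 - 1/gb^2 = (gb - gc)*(gb+gc)/(gb^2*gc^2)" using assms
    by (simp add: field_simps power2_eq_square)
  have nz: "ga - gb \<noteq> 0" "gb - gc \<noteq> 0" "ga \<noteq> 0" "gb \<noteq> 0" "gc \<noteq> 0" using assms by auto
  have e4: "X * ga^2 * gb^2 * (gb^2 - gc^2) = Y * gb^2 * gc^2 * (ga^2 - gb^2)"
    using e3 by algebra
  have nz2: "ga^2 - gb^2 \<noteq> 0" "gb^2 - gc^2 \<noteq> 0" using assms
    by (auto simp: power2_eq_square) (smt (verit) mult_strict_mono)+
  have d1': "1/gb^2 - 1/ga^2 = (ga^2 - gb^2)/(ga^2*gb^2)" using nz by (simp add: field_simps)
  have d2': "1/gc^2 - 1/gb^2 = (gb^2 - gc^2)/(gb^2*gc^2)" using nz by (simp add: field_simps)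
  show ?thesis unfolding d1' d2' using nz nz2 e4
    by (simp add: field_simps)
qed

lemma sqrt_inv_sq: "(y::real) > 0 \<Longrightarrow> sqrt (1 / y^2) = 1 / y"
  by (simp add: real_sqrt_divide)

lemma forward_integral:
  fixes R g :: "real \<Rightarrow> real" and c \<tau> s t :: real
  assumes st: "s < t" and c: "c > 0" and gpos: "\<And>y. y \<in> {s..t} \<Longrightarrow> g y > 0"
    and Rg: "\<And>y. y \<in> {s..t} \<Longrightarrow> R y = c * (1 / (g y)^2 - \<tau>)"
    and cg: "continuous_on {s..t} g" and mR: "mono_on {s..t} R" and gst: "g t < g s"
  shows "(LINT x:{s<..<t}|IM R s t. g x) / (R t - R s) = 2 * g s * g t / (g s + g t)"
proof -
  have cR: "continuous_on {s..t} R"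
  proof -
    have "continuous_on {s..t} (\<lambda>y. c * (1 / (g y)^2 - \<tau>))"
      using gpos by (intro continuous_intros cg) (auto, metis less_irrefl)
    then show ?thesis using Rg by (metis (mono_tags, lifting) continuous_on_cong)
  qed
  define D where "D = R t - R s"
  define H where "H = (\<lambda>x. R (max s (min t x)) - R s)"
  interpret K: clampH H s t D unfolding H_def D_def
    by (rule clampH_of_R) (use st cR mR in auto)
  define us where "us = 1 / (g s)^2"
  define ut where "ut = 1 / (g t)^2"
  have gs: "g s > 0" and gt: "g t > 0" using gpos st by auto
  have us0: "us > 0" using gs by (simp add: us_def)
  have D_eq: "D = c * (ut - us)" unfolding D_def ut_def us_def using Rg[of s] Rg[of t] st
    by (simp add: algebra_simps)
  define f where "f = (\<lambda>v. 1 / sqrt (v / c + us))"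
  have fmeas: "f \<in> borel_measurable borel" unfolding f_def by measurable
  have "(LINT x:{s<..<t}|IM R s t. g x) = (LINT x:{s<..<t}|interval_measure H. g x)"
    unfolding IM_eq H_def ..
  also have "\<dots> = (LINT v|lborel. indicator {0..D} v * f v)"
  proof (rule K.set_integral_H[OF fmeas])
    show "continuous_on {s<..<t} g" using cg by (rule continuous_on_subset) auto
    fix x assume x: "s < x" "x < t"
    then have "H x = c * (1 / (g x)^2 - \<tau>) - c * (1 / (g s)^2 - \<tau>)"
      unfolding H_def using Rg[of x] Rg[of s] st by simp
    then have "H x / c + us = 1 / (g x)^2" using c unfolding us_def by (simp add: field_simps)
    moreover have "g x > 0" using gpos x by auto
    ultimately show "g x = f (H x)" unfolding f_def by (simp add: sqrt_inv_sq)
  qed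
  also have "\<dots> = (LBINT v:{0..D}. f v)"
    by (simp add: set_lebesgue_integral_def)
  also have "\<dots> = (LBINT v=ereal 0..ereal D. f v)"
    using interval_integral_Icc[of 0 D f] K.D0 by (simp add: zero_ereal_def)
  also have "\<dots> = 2 * c * sqrt (D / c + us) - 2 * c * sqrt (0 / c + us)"
  proof (rule interval_integral_FTC_finite)
    have pos: "v / c + us > 0" if "v \<in> {min 0 D..max 0 D}" for v
      using that K.D0 c us0 by (auto intro!: add_nonneg_pos divide_nonneg_pos)
    show "continuous_on {min 0 D..max 0 D} f" unfolding f_def
      using pos c by (intro continuous_intros) (auto, metis less_irrefl)
    fix v assume v: "min 0 D \<le> v" "v \<le> max 0 D"
    then have p: "v / c + us > 0" using pos by auto
    have "((\<lambda>v. 2 * c * sqrt (v / c + us)) has_real_derivative 2 * c * (inverse (sqrt (v / c + us)) / 2 * (1 / c))) (at v within {min 0 D..max 0 D})"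
      using p by (auto intro!: derivative_eq_intros)
    moreover have "2 * c * (inverse (sqrt (v / c + us)) / 2 * (1 / c)) = f v"
      using c unfolding f_def by (simp add: field_simps)
    ultimately show "((\<lambda>v. 2 * c * sqrt (v / c + us)) has_vector_derivative f v) (at v within {min 0 D..max 0 D})"
      by (simp add: has_real_derivative_iff_has_vector_derivative)
  qed
  also have "\<dots> = 2 * c * (1 / g t - 1 / g s)"
  proof -
    have "D / c + us = ut" unfolding D_eq using c by simp
    then show ?thesis using gs gt unfolding ut_def us_def by (simp add: sqrt_inv_sq algebra_simps)
  qed
  finally have num: "(LINT x:{s<..<t}|IM R s t. g x) = 2 * c * (1 / g t - 1 / g s)" .
  have den: "R t - R s = c * (1 / g t - 1 / g s) * (1 / g t + 1 / g s)"
    using D_eq unfolding D_def ut_def us_def by (simp add: power2_eq_square algebra_simps)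
  have ne: "1 / g t - 1 / g s \<noteq> 0" using gst gs gt by (simp add: field_simps)
  have "2 * c * (1 / g t - 1 / g s) / (c * (1 / g t - 1 / g s) * (1 / g t + 1 / g s))
      = 2 / (1 / g t + 1 / g s)"
  proof -
    define a where "a = 1 / g t - 1 / g s"
    define b where "b = 1 / g t + 1 / g s"
    have "a \<noteq> 0" using ne a_def by simp
    then have "2 * c * a / (c * a * b) = 2 / b" using c by simp
    then show ?thesis unfolding a_def b_def .
  qed
  also have "\<dots> = 2 * g s * g t / (g s + g t)" using gs gt by (simp add: field_simps)
  finally show ?thesis unfolding num den .
qed

context
  fixes G :: "real \<Rightarrow> real"
  assumes dG: "is_distr_fun G" and cG: "continuous_on UNIV G"
begin

lemma monoG: "x \<le> y \<Longrightarrow> G x \<le> G y"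
  using dG by (auto simp: is_distr_fun_def mono_def)

lemma G_bot: "(G \<longlongrightarrow> 0) at_bot" using dG by (simp add: is_distr_fun_def)
lemma G_top: "(G \<longlongrightarrow> 1) at_top" using dG by (simp add: is_distr_fun_def)

lemma G_nonneg: "0 \<le> G x"
  using G_bot by (rule tendsto_upperbound) (auto simp: eventually_at_bot_linorder monoG intro!: exI[of _ x])

lemma G_S: "lG G < ereal y \<Longrightarrow> ereal y < rG G \<Longrightarrow> 0 < G y \<and> G y < 1"
proof
  assume "lG G < ereal y"
  then obtain z where "G z > 0" "ereal z < ereal y" unfolding lG_def Inf_less_iff by auto
  then show "0 < G y" using monoG[of z y] by simp
next
  assume "ereal y < rG G"
  then obtain z where "G z < 1" "ereal y < ereal z" unfolding rG_def less_Sup_iff by auto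
  then show "G y < 1" using monoG[of y z] by simp
qed

lemma G_val: assumes "0 < v" "v < 1" shows "\<exists>y. G y = v"
proof -
  have "eventually (\<lambda>x. G x < v) at_bot" using order_tendstoD(2)[OF G_bot] assms by simp
  then obtain a where a: "G a < v" by (auto simp: eventually_at_bot_linorder)
  have "eventually (\<lambda>x. G x > v) at_top" using order_tendstoD(1)[OF G_top] assms by simp
  then obtain b where b: "G b > v" by (auto simp: eventually_at_top_linorder)
  have "a \<le> b" using a b monoG[of b a] by (cases "a \<le> b") auto
  then show ?thesis using IVT'[of G a v b] a b continuous_on_subset[OF cG] by auto
qed

lemma lG_le: "G y > 0 \<Longrightarrow> lG G \<le> ereal y"
  unfolding lG_def by (rule Inf_lower) auto
lemma rG_ge: "G y < 1 \<Longrightarrow> ereal y \<le> rG G"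
  unfolding rG_def by (rule Sup_upper) auto

lemma S_two: "\<exists>y0 y1. y0 < y1 \<and> lG G < ereal y0 \<and> ereal y1 < rG G"
proof -
  obtain a b c d where ab: "G a = 1/5" "G b = 2/5" "G c = 3/5" "G d = 4/5"
    using G_val[of "1/5"] G_val[of "2/5"] G_val[of "3/5"] G_val[of "4/5"] by auto
  have lt: "x < y" if "G x < G y" for x y using monoG[of y x] that by (cases "x < y") auto
  have "a < b" "b < c" "c < d" using lt ab by auto
  moreover have "lG G \<le> ereal a" using lG_le ab by simp
  moreover have "ereal d \<le> rG G" using rG_ge ab by simp
  ultimately have "lG G < ereal b" "ereal c < rG G"
    using order.strict_trans1[of "lG G" "ereal a" "ereal b"] order.strict_trans2[of "ereal c" "ereal d" "rG G"]
    by auto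
  then show ?thesis using \<open>b < c\<close> by blast
qed

lemma G_lim_l: "(G \<longlongrightarrow> 0) (at_right_e (lG G))"
proof (cases "lG G = -\<infinity>")
  case True
  then show ?thesis using G_bot by (simp add: at_right_e_def)
next
  case False
  obtain y0 y1 where y: "y0 < y1" "lG G < ereal y0" "ereal y1 < rG G" using S_two by blast
  then have "lG G \<noteq> \<infinity>" by auto
  with False obtain l where l: "lG G = ereal l" by (cases "lG G") auto
  have Gl: "G l = 0"
  proof (rule ccontr)
    assume "G l \<noteq> 0"
    then have "G l > 0" using G_nonneg[of l] by simp
    have "isCont G l" using cG by (simp add: continuous_on_eq_continuous_at)
    then have "(G \<longlongrightarrow> G l) (at_left l)" by (simp add: isCont_def filterlim_at_split)
    then have "eventually (\<lambda>x. G x > 0) (at_left l)" using order_tendstoD(1) \<open>G l > 0\<close> by blast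
    moreover have "eventually (\<lambda>x. x \<in> {l - 1<..<l}) (at_left l)" by (rule eventually_at_left_real) simp
    ultimately have "eventually (\<lambda>x. G x > 0 \<and> x < l) (at_left l)"
      by eventually_elim auto
    then obtain z where "G z > 0" "z < l" using eventually_happens'[OF trivial_limit_at_left_real] by blast
    then have "lG G \<le> ereal z" using lG_le by blast
    with l \<open>z < l\<close> show False by simp
  qed
  have "isCont G l" using cG by (simp add: continuous_on_eq_continuous_at)
  then have "(G \<longlongrightarrow> G l) (at_right l)" by (simp add: isCont_def filterlim_at_split)
  then show ?thesis using Gl l by (simp add: at_right_e_def)
qed

lemma ev_S:
  assumes "lG G < ereal y0" "ereal y0 < rG G"
  shows "eventually (\<lambda>y. lG G < ereal y \<and> ereal y < rG G) (at_right_e (lG G))"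
    and "at_right_e (lG G) \<noteq> bot"
proof -
  have ne: "lG G \<noteq> \<infinity>" using assms by auto
  show "at_right_e (lG G) \<noteq> bot"
    using ne by (cases "lG G") (auto simp: at_right_e_def trivial_limit_at_bot_linorder)
  show "eventually (\<lambda>y. lG G < ereal y \<and> ereal y < rG G) (at_right_e (lG G))"
  proof (cases "lG G")
    case (real l)
    then have "l < y0" using assms by simp
    then have "eventually (\<lambda>x. x \<in> {l<..<y0}) (at_right l)" by (rule eventually_at_right_real)
    then show ?thesis using real assms(2) unfolding at_right_e_def
      by (auto elim!: eventually_mono intro: order.strict_trans[of _ "ereal y0"])
  next
    case PInf then show ?thesis using ne by simp
  next
    case MInf
    have "eventually (\<lambda>x. x < y0) at_bot" by (auto simp: eventually_at_bot_dense)
    then show ?thesis unfolding at_right_e_def using MInf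
    proof (simp, elim eventually_mono)
      fix x assume "x < y0"
      then show "ereal x < rG G" using assms(2) order.strict_trans[of "ereal x" "ereal y0"] by simp
    qed
  qed
qed

end

theorem corollary3:
  fixes G g :: "real \<Rightarrow> real" and n :: nat and \<tau> :: real
  assumes "n \<ge> 2"
    and "is_distr_fun G" and "continuous_on UNIV G"
    and "\<And>y. lG G < ereal y \<Longrightarrow> ereal y < rG G \<Longrightarrow> g y > 0"
    and "continuous_on {y. lG G < ereal y \<and> ereal y < rG G} g"
    and "strict_antimono_on {y. lG G < ereal y \<and> ereal y < rG G} g"
    and "(g \<longlongrightarrow> 0) (at_left_e (rG G))"
    and "((\<lambda>y. 1 / (g y)\<^sup>2) \<longlongrightarrow> \<tau>) (at_right_e (lG G))"
  shows "(\<forall>s t. lG G < ereal s \<and> s < t \<and> ereal t < rG G \<longrightarrow>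
            rec_cond_exp G g s t = 2 * g s * g t / (g s + g t))
         \<longleftrightarrow> (\<exists>c>0. \<forall>y. lG G < ereal y \<and> ereal y < rG G \<longrightarrow>
                G y = 1 - exp (- c * (1 / (g y)\<^sup>2 - \<tau>)))"
proof -
  note dG = assms(2) and cG = assms(3) and gpos0 = assms(4) and cg = assms(5)
    and ganti = assms(6) and gtau = assms(8)
  define S where "S = {y. lG G < ereal y \<and> ereal y < rG G}"
  define R where "R = hazR G"
  define u where "u = (\<lambda>y. 1 / (g y)\<^sup>2)"
  have inS: "y \<in> S \<longleftrightarrow> lG G < ereal y \<and> ereal y < rG G" for y by (simp add: S_def)
  have gpos: "y \<in> S \<Longrightarrow> g y > 0" for y using gpos0 by (simp add: S_def)
  have G01: "y \<in> S \<Longrightarrow> 0 < G y \<and> G y < 1" for y using G_S[OF dG cG] by (simp add: S_def)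
  have Sconv: "x \<in> S" if "s \<in> S" "t \<in> S" "s \<le> x" "x \<le> t" for s t x
  proof -
    have "lG G < ereal x" using that order.strict_trans2[of "lG G" "ereal s" "ereal x"] by (simp add: S_def)
    moreover have "ereal x < rG G" using that order.strict_trans1[of "ereal x" "ereal t" "rG G"] by (simp add: S_def)
    ultimately show ?thesis by (simp add: S_def)
  qed
  have sub: "{s..t} \<subseteq> S" if "s \<in> S" "t \<in> S" for s t
  proof
    fix x assume "x \<in> {s..t}" then show "x \<in> S" using Sconv[OF that] by simp
  qed
  have gdec: "g t < g s" if "s \<in> S" "t \<in> S" "s < t" for s t
    using ganti that unfolding S_def monotone_on_def by auto
  have cR: "continuous_on S R"
  proof -
    have cG': "continuous_on S G" using cG by (rule continuous_on_subset) simp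
    have "continuous_on S (\<lambda>y. - ln (1 - G y))"
      using G01 by (intro continuous_intros cG') force
    then show ?thesis by (simp add: R_def hazR_def[abs_def])
  qed
  have mR: "mono_on S R"
  proof (rule mono_onI)
    fix x y assume "x \<in> S" "y \<in> S" "x \<le> y"
    then show "R x \<le> R y" using G01[of x] G01[of y] monoG[OF dG cG, of x y]
      by (simp add: R_def hazR_def)
  qed
  have GR: "G y = 1 - exp (- R y)" if "y \<in> S" for y
    using G01[OF that] by (simp add: R_def hazR_def)
  have rce: "rec_cond_exp G g s t = (LINT x:{s<..<t}|IM R s t. g x) / (R t - R s)" for s t
    by (simp add: rec_cond_exp_def hazR_measure_def IM_def R_def)
  show ?thesis
  proof
    assume RHS: "\<exists>c>0. \<forall>y. lG G < ereal y \<and> ereal y < rG G \<longrightarrow>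
                G y = 1 - exp (- c * (1 / (g y)\<^sup>2 - \<tau>))"
    then obtain c where c: "c > 0" and Gc: "\<And>y. y \<in> S \<Longrightarrow> G y = 1 - exp (- c * (1 / (g y)\<^sup>2 - \<tau>))"
      by (auto simp: S_def)
    have Rc: "R y = c * (1 / (g y)\<^sup>2 - \<tau>)" if "y \<in> S" for y
      using Gc[OF that] by (simp add: R_def hazR_def)
    show "\<forall>s t. lG G < ereal s \<and> s < t \<and> ereal t < rG G \<longrightarrow>
            rec_cond_exp G g s t = 2 * g s * g t / (g s + g t)"
    proof (intro allI impI)
      fix s t assume st: "lG G < ereal s \<and> s < t \<and> ereal t < rG G"
      then have sS: "s \<in> S" and tS: "t \<in> S"
        unfolding S_def using order.strict_trans[of "ereal s" "ereal t" "rG G"]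
          order.strict_trans[of "lG G" "ereal s" "ereal t"] by auto
      show "rec_cond_exp G g s t = 2 * g s * g t / (g s + g t)"
        unfolding rce
      proof (rule forward_integral)
        show "s < t" using st by simp
        show "c > 0" by (rule c)
        show "\<And>y. y \<in> {s..t} \<Longrightarrow> g y > 0" using gpos sub[OF sS tS] by auto
        show "\<And>y. y \<in> {s..t} \<Longrightarrow> R y = c * (1 / (g y)\<^sup>2 - \<tau>)" using Rc sub[OF sS tS] by auto
        show "continuous_on {s..t} g" using cg sub[OF sS tS] unfolding S_def by (rule continuous_on_subset)
        show "mono_on {s..t} R" using mR sub[OF sS tS] by (rule mono_on_subset)
        show "g t < g s" using gdec sS tS st by simp
      qed
    qed
  next
    assume LHS: "\<forall>s t. lG G < ereal s \<and> s < t \<and> ereal t < rG G \<longrightarrow>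
            rec_cond_exp G g s t = 2 * g s * g t / (g s + g t)"
    show "\<exists>c>0. \<forall>y. lG G < ereal y \<and> ereal y < rG G \<longrightarrow>
                G y = 1 - exp (- c * (1 / (g y)\<^sup>2 - \<tau>))"
    proof -
      have Ieq: "(LINT x:{s<..<t}|IM R s t. g x) = (R t - R s) * (2 * g s * g t / (g s + g t)) \<and> R s < R t"
        if sS: "s \<in> S" and tS: "t \<in> S" and st: "s < t" for s t
      proof -
        have "rec_cond_exp G g s t = 2 * g s * g t / (g s + g t)"
          using LHS sS tS st by (simp add: S_def)
        then have e: "(LINT x:{s<..<t}|IM R s t. g x) / (R t - R s) = 2 * g s * g t / (g s + g t)"
          by (simp add: rce)
        have mpos: "2 * g s * g t / (g s + g t) > 0" using gpos[OF sS] gpos[OF tS] by simp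
        have "R t \<noteq> R s"
        proof
          assume "R t = R s"
          then have "2 * g s * g t / (g s + g t) = 0" using e by simp
          then show False using mpos by linarith
        qed
        moreover have "R s \<le> R t" using mR sS tS st by (auto intro: mono_onD)
        ultimately have lt: "R s < R t" by simp
        then show ?thesis using e by (simp add: field_simps)
      qed
      have upos: "u a < u b" if "a \<in> S" "b \<in> S" "a < b" for a b
      proof -
        have "g b < g a" using gdec that by simp
        moreover have "g b > 0" using gpos that by simp
        ultimately have "(g b)\<^sup>2 < (g a)\<^sup>2" by (simp add: power_strict_mono)
        moreover have "(g b)\<^sup>2 > 0" using \<open>g b > 0\<close> by simp
        ultimately show ?thesis unfolding u_def by (simp add: frac_less2)
      qed
      have three: "(R b - R a) / (u b - u a) = (R c - R b) / (u c - u b)"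
        if aS: "a \<in> S" and bS: "b \<in> S" and cS: "c \<in> S" and ab: "a < b" and bc: "b < c" for a b c
      proof -
        have sac: "{a..c} \<subseteq> S" by (rule sub[OF aS cS])
        have add: "(LINT x:{a<..<c}|IM R a c. g x)
           = (LINT x:{a<..<b}|IM R a b. g x) + (LINT x:{b<..<c}|IM R b c. g x)"
        proof (rule additivity)
          show "a \<le> b" "b \<le> c" using ab bc by auto
          show "continuous_on {a..c} R" using cR sac by (rule continuous_on_subset)
          show "mono_on {a..c} R" using mR sac by (rule mono_on_subset)
          show "continuous_on {a..c} g" using cg sac unfolding S_def by (rule continuous_on_subset)
        qed
        have eq: "(R b - R a) * (2 * g a * g b / (g a + g b)) + (R c - R b) * (2 * g b * g c / (g b + g c))
            = ((R b - R a) + (R c - R b)) * (2 * g a * g c / (g a + g c))"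
          using add Ieq[OF aS bS ab] Ieq[OF bS cS bc] Ieq[OF aS cS order.strict_trans[OF ab bc]] by simp
        have "(R b - R a) / (1 / (g b)\<^sup>2 - 1 / (g a)\<^sup>2) = (R c - R b) / (1 / (g c)\<^sup>2 - 1 / (g b)\<^sup>2)"
          by (rule alg3[OF _ _ _ eq]) (use gdec gpos aS bS cS ab bc in auto)
        then show ?thesis by (simp add: u_def)
      qed
      obtain y0 y1 where y01: "y0 < y1" "lG G < ereal y0" "ereal y1 < rG G" using S_two[OF dG cG] by blast
      have y0S: "y0 \<in> S" and y1S: "y1 \<in> S" unfolding S_def
        using y01 order.strict_trans[of "ereal y0" "ereal y1" "rG G"]
          order.strict_trans[of "lG G" "ereal y0" "ereal y1"] by auto
      define K where "K = (R y1 - R y0) / (u y1 - u y0)"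
      have Kpos: "K > 0" unfolding K_def using Ieq[OF y0S y1S y01(1)] upos[OF y0S y1S y01(1)] by simp
      have lin: "R y = R y0 + K * (u y - u y0)" if yS: "y \<in> S" for y
      proof -
        consider "y < y0" | "y = y0" | "y0 < y \<and> y < y1" | "y = y1" | "y1 < y" by linarith
        then show ?thesis
        proof cases
          case 1
          have "(R y0 - R y) / (u y0 - u y) = (R y1 - R y0) / (u y1 - u y0)"
            by (rule three[OF yS y0S y1S 1 y01(1)])
          then have "R y0 - R y = K * (u y0 - u y)"
            using upos[OF yS y0S 1] upos[OF y0S y1S y01(1)] unfolding K_def by (simp add: field_simps)
          then show ?thesis by (simp add: algebra_simps)
        next
          case 2 then show ?thesis by simp
        next
          case 3
          have e: "(R y - R y0) / (u y - u y0) = (R y1 - R y) / (u y1 - u y)"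
            using three[OF y0S yS y1S] 3 by simp
          define q where "q = (R y - R y0) / (u y - u y0)"
          have p1: "u y - u y0 > 0" "u y1 - u y > 0" using upos y0S yS y1S 3 by auto
          have h1: "R y - R y0 = q * (u y - u y0)" unfolding q_def using p1 by simp
          have h2: "R y1 - R y = q * (u y1 - u y)" using e p1 unfolding q_def[symmetric] by (simp add: field_simps)
          have "R y1 - R y0 = q * (u y1 - u y0)" using h1 h2 by (simp add: algebra_simps)
          then have "K = q" unfolding K_def using upos[OF y0S y1S y01(1)] by simp
          then show ?thesis using h1 by simp
        next
          case 4 then show ?thesis unfolding K_def using upos[OF y0S y1S y01(1)] by simp
        next
          case 5
          have "(R y1 - R y0) / (u y1 - u y0) = (R y - R y1) / (u y - u y1)"
            by (rule three[OF y0S y1S yS y01(1) 5])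
          then have "R y - R y1 = K * (u y - u y1)"
            using upos[OF y1S yS 5] unfolding K_def[symmetric] by (simp add: field_simps)
          moreover have "R y1 - R y0 = K * (u y1 - u y0)"
            unfolding K_def using upos[OF y0S y1S y01(1)] by simp
          ultimately show ?thesis by (simp add: algebra_simps)
        qed
      qed
      define F where "F = at_right_e (lG G)"
      have evS: "eventually (\<lambda>y. y \<in> S) F" and Fne: "F \<noteq> bot"
        using ev_S[OF dG cG y01(2)] y0S unfolding F_def S_def by auto
      have "((\<lambda>y. - ln (1 - G y)) \<longlongrightarrow> - ln (1 - 0)) F"
        unfolding F_def by (intro tendsto_intros G_lim_l[OF dG cG]) simp
      then have R0: "(R \<longlongrightarrow> 0) F" by (simp add: R_def hazR_def[abs_def])
      have "((\<lambda>y. R y0 + K * (u y - u y0)) \<longlongrightarrow> R y0 + K * (\<tau> - u y0)) F"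
        using gtau unfolding F_def u_def by (intro tendsto_intros)
      moreover have "((\<lambda>y. R y0 + K * (u y - u y0)) \<longlongrightarrow> 0) F"
        using R0 by (rule Lim_transform_eventually) (use evS in \<open>auto elim: eventually_mono simp: lin\<close>)
      ultimately have c0: "R y0 + K * (\<tau> - u y0) = 0" using Fne tendsto_unique by blast
      show ?thesis
      proof (intro exI[of _ K] conjI allI impI Kpos)
        fix y assume "lG G < ereal y \<and> ereal y < rG G"
        then have yS: "y \<in> S" by (simp add: S_def)
        have "R y = K * (u y - \<tau>)" using lin[OF yS] c0 by (simp add: algebra_simps)
        then show "G y = 1 - exp (- K * (1 / (g y)\<^sup>2 - \<tau>))" using GR[OF yS] by (simp add: u_def)
      qed
    qed
  qed
qed

end
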